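(* Let $S$ be an intra-regular semigroup. Then Green's relation $\mathcal{J}$ equals the relation $\mathcal{I}$ on $S$.
   Context: A semigroup $S$ is intra-regular if $a\in Sa^{2}S$ for every $a\in S$. For $a\in S$, $I(a)=\{a\}\cup Sa\cup aS\cup SaS$ and $\mathrm{IN}(a)=\{a\}\cup\{a^{2}\}\cup SaS$. $a\,\mathcal{J}\,b$ iff $I(a)=I(b)$, and $a\,\mathcal{I}\,b$ iff $\mathrm{IN}(a)=\mathrm{IN}(b)$. *)

theory Defs
  imports Main
begin

text \<open>The semigroup S is the whole carrier of a type of class semigroup_mult.\<close>

definition intra_regular :: "'a::semigroup_mult itself \<Rightarrow> bool" where
  "intra_regular _ \<longleftrightarrow> (\<forall>a::'a. \<exists>x y. a = x * (a * a) * y)"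

definition ideal_gen :: "'a::semigroup_mult \<Rightarrow> 'a set" where
  "ideal_gen a = {a} \<union> {s * a | s. True} \<union> {a * s | s. True} \<union> {s * a * t | s t. True}"

definition IN_gen :: "'a::semigroup_mult \<Rightarrow> 'a set" where
  "IN_gen a = {a} \<union> {a * a} \<union> {s * a * t | s t. True}"

definition greenJ :: "'a::semigroup_mult rel" where
  "greenJ = {(a, b). ideal_gen a = ideal_gen b}"

definition relI :: "'a::semigroup_mult rel" where
  "relI = {(a, b). IN_gen a = IN_gen b}"

end

theory Submission
  imports Defs
begin

lemma SaS_ideal:
  assumes "intra_regular TYPE('a::semigroup_mult)"
  shows "ideal_gen (a::'a) = {s * a * t | s t. True}"
proof -
  obtain x y where xy: "a = x * (a * a) * y" using assms unfolding intra_regular_def by blast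
  have 1: "a \<in> {s * a * t | s t. True}"
    by (rule CollectI, rule exI[of _ "x*a"], rule exI[of _ y]) (metis xy mult.assoc)
  have 2: "s * a \<in> {s * a * t | s t. True}" for s
    by (rule CollectI, rule exI[of _ "s*x*a"], rule exI[of _ y]) (metis xy mult.assoc)
  have 3: "a * s \<in> {s * a * t | s t. True}" for s
    by (rule CollectI, rule exI[of _ "x*a"], rule exI[of _ "y*s"]) (metis xy mult.assoc)
  show ?thesis unfolding ideal_gen_def using 1 2 3 by blast
qed

lemma SaS_IN:
  assumes "intra_regular TYPE('a::semigroup_mult)"
  shows "IN_gen (a::'a) = {s * a * t | s t. True}"
proof -
  obtain x y where xy: "a = x * (a * a) * y" using assms unfolding intra_regular_def by blast
  have 1: "a \<in> {s * a * t | s t. True}"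
    by (rule CollectI, rule exI[of _ "x*a"], rule exI[of _ y]) (metis xy mult.assoc)
  have 2: "a * a \<in> {s * a * t | s t. True}"
    by (rule CollectI, rule exI[of _ "x*a"], rule exI[of _ "y*a"]) (metis xy mult.assoc)
  show ?thesis unfolding IN_gen_def using 1 2 by blast
qed

theorem mainTheorem19:
  assumes "intra_regular TYPE('a::semigroup_mult)"
  shows "(greenJ :: 'a rel) = relI"
  unfolding greenJ_def relI_def using SaS_ideal[OF assms] SaS_IN[OF assms] by simp

end
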